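(* In the setting described in the context, if $(x_1,L_1),(x_2,L_2)\in\mathcal E_\varphi$ with $x_1\neq x_2$, then $L_1$ and $L_2$ are transverse.
   Context: $V$ real symplectic of dimension $2n$, $\mathcal L(V)$ its Lagrangian Grassmannian, $\Gamma<\mathrm{PU}(1,1)$ a torsion-free cocompact lattice acting on $\mathbb S^1=\partial\mathcal D_{1,1}$, $\rho:\Gamma\to\mathrm{Sp}(V)$ a homomorphism, and $\varphi:\mathbb S^1\to\mathcal L(V)$ a $\rho$-equivariant measurable map such that (i) $\beta_n(\varphi(x),\varphi(y),\varphi(z))=n\beta_1(x,y,z)$ for Lebesgue-a.e. $(x,y,z)$, and (ii) for every $L\in\mathcal L(V)$ the set of $x$ with $\varphi(x)\cap L\neq0$ has Lebesgue measure zero. Here $\beta_n(L_1,L_2,L_3)$ is the signature of $(x_1,x_2,x_3)\mapsto\langle x_1,x_2\rangle+\langle x_2,x_3\rangle+\langle x_3,x_1\rangle$ on $L_1\oplus L_2\oplus L_3$, and $\beta_1(x,y,z)=\pm1$ for pairwise distinct positively/negatively cyclically ordered triples in $\mathbb S^1$, $0$ otherwise. The essential graph $\mathcal E_\varphi\subset\mathbb S^1\times\mathcal L(V)$ is the support of the pushforward of Lebesgue measure under $x\mapsto(x,\varphi(x))$. *)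

theory Defs
  imports "HOL-Analysis.Analysis"
begin

text \<open>A real symplectic vector space of dimension 2n: the carrier is a Euclidean
  space 'v (the inner product only serves to topologize the Grassmannian) and
  omega is a nondegenerate alternating bilinear form.\<close>

definition symplectic_space :: "('v::euclidean_space \<Rightarrow> 'v \<Rightarrow> real) \<Rightarrow> nat \<Rightarrow> bool" where
  "symplectic_space \<omega> n \<longleftrightarrow>
     bilinear \<omega> \<and> (\<forall>u v. \<omega> u v = - \<omega> v u) \<and>
     (\<forall>u. (\<forall>v. \<omega> u v = 0) \<longrightarrow> u = 0) \<and> DIM('v) = 2 * n"

definition lagrangian :: "('v::euclidean_space \<Rightarrow> 'v \<Rightarrow> real) \<Rightarrow> nat \<Rightarrow> 'v set \<Rightarrow> bool" where
  "lagrangian \<omega> n L \<longleftrightarrow> subspace L \<and> dim L = n \<and> (\<forall>u\<in>L. \<forall>v\<in>L. \<omega> u v = 0)"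

definition symplectic_map :: "('v::euclidean_space \<Rightarrow> 'v \<Rightarrow> real) \<Rightarrow> ('v \<Rightarrow> 'v) \<Rightarrow> bool" where
  "symplectic_map \<omega> g \<longleftrightarrow> linear g \<and> bij g \<and> (\<forall>u v. \<omega> (g u) (g v) = \<omega> u v)"

text \<open>Topology on the Lagrangian Grassmannian: a subspace is identified with
  its orthogonal projection, a bounded linear operator.\<close>
definition oproj :: "'v::euclidean_space set \<Rightarrow> 'v \<Rightarrow> 'v" where
  "oproj L v = (THE w. w \<in> L \<and> (\<forall>u\<in>L. (v - w) \<bullet> u = 0))"

definition lproj :: "'v::euclidean_space set \<Rightarrow> 'v \<Rightarrow>\<^sub>L 'v" where
  "lproj L = Blinfun (oproj L)"

definition pos_index :: "('w::euclidean_space \<Rightarrow> real) \<Rightarrow> 'w set \<Rightarrow> nat" where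
  "pos_index q W = Max {dim U | U. subspace U \<and> U \<subseteq> W \<and> (\<forall>u\<in>U. u \<noteq> 0 \<longrightarrow> q u > 0)}"

definition neg_index :: "('w::euclidean_space \<Rightarrow> real) \<Rightarrow> 'w set \<Rightarrow> nat" where
  "neg_index q W = Max {dim U | U. subspace U \<and> U \<subseteq> W \<and> (\<forall>u\<in>U. u \<noteq> 0 \<longrightarrow> q u < 0)}"

definition signature :: "('w::euclidean_space \<Rightarrow> real) \<Rightarrow> 'w set \<Rightarrow> int" where
  "signature q W = int (pos_index q W) - int (neg_index q W)"

definition maslov :: "('v::euclidean_space \<Rightarrow> 'v \<Rightarrow> real) \<Rightarrow> 'v set \<Rightarrow> 'v set \<Rightarrow> 'v set \<Rightarrow> int" where
  "maslov \<omega> L1 L2 L3 =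
     signature (\<lambda>(x1, x2, x3). \<omega> x1 x2 + \<omega> x2 x3 + \<omega> x3 x1) (L1 \<times> L2 \<times> L3)"

text \<open>Orientation cocycle beta_1 on the unit circle in the complex plane:
  +1 for pairwise distinct counterclockwise (positively) ordered triples,
  -1 for clockwise ordered ones, 0 otherwise.\<close>
definition beta1 :: "complex \<Rightarrow> complex \<Rightarrow> complex \<Rightarrow> int" where
  "beta1 x y z =
     (if x \<noteq> y \<and> y \<noteq> z \<and> x \<noteq> z
      then (if Im (cnj (y - x) * (z - x)) > 0 then 1 else -1) else 0)"

text \<open>SU(1,1) = matrices [[a, b], [cnj b, cnj a]] with |a|^2 - |b|^2 = 1,
  represented by the pair (a,b).  PU(1,1) = SU(1,1)/{+1,-1}; a subgroup of
  PU(1,1) is represented by its (sign-closed) preimage in SU(1,1).\<close>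
definition su11 :: "(complex \<times> complex) set" where
  "su11 = {(a, b). (cmod a)\<^sup>2 - (cmod b)\<^sup>2 = 1}"

definition su11_mult :: "complex \<times> complex \<Rightarrow> complex \<times> complex \<Rightarrow> complex \<times> complex" where
  "su11_mult g h = (case g of (a, b) \<Rightarrow> case h of (c, d) \<Rightarrow>
      (a * c + b * cnj d, a * d + b * cnj c))"

definition su11_inv :: "complex \<times> complex \<Rightarrow> complex \<times> complex" where
  "su11_inv g = (case g of (a, b) \<Rightarrow> (cnj a, - b))"

definition su11_neg :: "complex \<times> complex \<Rightarrow> complex \<times> complex" where
  "su11_neg g = (case g of (a, b) \<Rightarrow> (- a, - b))"

fun su11_pow :: "complex \<times> complex \<Rightarrow> nat \<Rightarrow> complex \<times> complex" where
  "su11_pow g 0 = (1, 0)"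
| "su11_pow g (Suc k) = su11_mult g (su11_pow g k)"

definition pu11_act :: "complex \<times> complex \<Rightarrow> complex \<Rightarrow> complex" where
  "pu11_act g z = (case g of (a, b) \<Rightarrow> (a * z + b) / (cnj b * z + cnj a))"

definition torsion_free_cocompact_lattice :: "(complex \<times> complex) set \<Rightarrow> bool" where
  "torsion_free_cocompact_lattice \<Gamma> \<longleftrightarrow>
     \<Gamma> \<subseteq> su11 \<and> (1, 0) \<in> \<Gamma> \<and>
     (\<forall>g\<in>\<Gamma>. \<forall>h\<in>\<Gamma>. su11_mult g h \<in> \<Gamma>) \<and>
     (\<forall>g\<in>\<Gamma>. su11_inv g \<in> \<Gamma>) \<and>
     (\<forall>g\<in>\<Gamma>. su11_neg g \<in> \<Gamma>) \<and>
     (\<forall>g\<in>\<Gamma>. \<exists>e>0. \<forall>h\<in>\<Gamma>. dist h g < e \<longrightarrow> h = g) \<and>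
     (\<exists>K. compact K \<and> K \<subseteq> su11 \<and> su11 \<subseteq> {su11_mult g k | g k. g \<in> \<Gamma> \<and> k \<in> K}) \<and>
     (\<forall>g\<in>\<Gamma>. \<forall>k\<ge>1. su11_pow g k \<in> {(1, 0), (-1, 0)} \<longrightarrow> g \<in> {(1, 0), (-1, 0)})"

text \<open>Lebesgue measure on the circle is transported from [0, 2 pi) via t \<mapsto> cis t.
  The essential graph is the support of the pushforward of this measure under
  x \<mapsto> (x, phi x) on S^1 \<times> L(V): the points all of whose (basic) neighbourhoods
  have positive measure.\<close>
definition essential_graph ::
  "('v::euclidean_space \<Rightarrow> 'v \<Rightarrow> real) \<Rightarrow> nat \<Rightarrow> (complex \<Rightarrow> 'v set) \<Rightarrow> (complex \<times> 'v set) set" where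
  "essential_graph \<omega> n \<phi> = {(x, L). cmod x = 1 \<and> lagrangian \<omega> n L \<and>
      (\<forall>e>0. emeasure lebesgue
         {t \<in> {0..<2 * pi}. dist (cis t) x < e \<and> norm (lproj (\<phi> (cis t)) - lproj L) < e} > 0)}"

end

theory Submission
  imports Defs
begin

lemma oproj_ex:
  fixes L :: "'v::euclidean_space set"
  assumes "subspace L"
  shows "oproj L v \<in> L \<and> (\<forall>u\<in>L. (v - oproj L v) \<bullet> u = 0)"
proof -
  obtain y z where y: "y \<in> span L" and z: "\<And>w. w \<in> span L \<Longrightarrow> orthogonal z w" and vz: "v = y + z"
    using orthogonal_subspace_decomp_exists[of L v] by blast
  have yL: "y \<in> L" using y assms span_eq_iff by blast
  have P: "y \<in> L \<and> (\<forall>u\<in>L. (v - y) \<bullet> u = 0)"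
    using yL z vz by (simp add: orthogonal_def span_base)
  have U: "w = y" if "w \<in> L \<and> (\<forall>u\<in>L. (v - w) \<bullet> u = 0)" for w
  proof -
    have d: "w - y \<in> L" using that yL assms by (simp add: subspace_diff)
    have "((v - y) - (v - w)) \<bullet> (w - y) = 0" using P that d by (simp only: inner_diff_left)
    moreover have "(v - y) - (v - w) = w - y" by simp
    ultimately have "(w - y) \<bullet> (w - y) = 0" by simp
    then show ?thesis by simp
  qed
  have "oproj L v = y" unfolding oproj_def using P U by (rule the_equality)
  then show ?thesis using P by simp
qed

lemma oproj_unique:
  fixes L :: "'v::euclidean_space set"
  assumes "subspace L" "w \<in> L" "\<forall>u\<in>L. (v - w) \<bullet> u = 0"
  shows "oproj L v = w"
proof -
  have P: "oproj L v \<in> L" "\<forall>u\<in>L. (v - oproj L v) \<bullet> u = 0" using oproj_ex[OF assms(1)] by auto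
  have d: "w - oproj L v \<in> L" using P assms by (simp add: subspace_diff)
  have "((v - oproj L v) - (v - w)) \<bullet> (w - oproj L v) = 0" using P assms d by (simp only: inner_diff_left)
  moreover have "(v - oproj L v) - (v - w) = w - oproj L v" by simp
  ultimately have "(w - oproj L v) \<bullet> (w - oproj L v) = 0" by simp
  then show ?thesis by simp
qed

lemma oproj_id:
  fixes L :: "'v::euclidean_space set"
  assumes "subspace L" "v \<in> L"
  shows "oproj L v = v"
  using oproj_unique[OF assms(1,2)] by simp

lemma oproj_linear:
  fixes L :: "'v::euclidean_space set"
  assumes "subspace L"
  shows "linear (oproj L)"
proof (rule linearI)
  fix x y
  have P: "\<And>v. oproj L v \<in> L" "\<And>v. \<forall>u\<in>L. (v - oproj L v) \<bullet> u = 0" using oproj_ex[OF assms] by auto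
  show "oproj L (x + y) = oproj L x + oproj L y"
    apply (rule oproj_unique[OF assms])
    using P assms apply (simp add: subspace_add)
  proof
    fix u assume "u \<in> L"
    have "(x + y - (oproj L x + oproj L y)) \<bullet> u = (x - oproj L x) \<bullet> u + (y - oproj L y) \<bullet> u"
      by (simp add: inner_diff_left inner_add_left)
    then show "(x + y - (oproj L x + oproj L y)) \<bullet> u = 0" using P \<open>u \<in> L\<close> by simp
  qed
next
  fix c x
  have P: "\<And>v. oproj L v \<in> L" "\<And>v. \<forall>u\<in>L. (v - oproj L v) \<bullet> u = 0" using oproj_ex[OF assms] by auto
  show "oproj L (c *\<^sub>R x) = c *\<^sub>R oproj L x"
    apply (rule oproj_unique[OF assms])
    using P assms apply (simp add: subspace_scale)
  proof
    fix u assume "u \<in> L"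
    have "(c *\<^sub>R x - c *\<^sub>R oproj L x) \<bullet> u = c * ((x - oproj L x) \<bullet> u)"
      by (simp add: inner_diff_left right_diff_distrib)
    then show "(c *\<^sub>R x - c *\<^sub>R oproj L x) \<bullet> u = 0" using P \<open>u \<in> L\<close> by simp
  qed
qed

lemma lproj_apply:
  fixes L :: "'v::euclidean_space set"
  assumes "subspace L"
  shows "blinfun_apply (lproj L) = oproj L"
  unfolding lproj_def
  by (rule bounded_linear_Blinfun_apply) (rule linear_conv_bounded_linear[THEN iffD1, OF oproj_linear[OF assms]])

lemma lproj_close:
  fixes L L' :: "'v::euclidean_space set"
  assumes "subspace L" "subspace L'" "v \<in> L"
  shows "norm (oproj L' v - v) \<le> norm (lproj L' - lproj L) * norm v"
proof -
  have "oproj L' v - v = blinfun_apply (lproj L' - lproj L) v"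
    using lproj_apply[OF assms(1)] lproj_apply[OF assms(2)] oproj_id[OF assms(1,3)]
    by (simp add: blinfun.diff_left)
  then show ?thesis using norm_blinfun by metis
qed


locale symp =
  fixes \<omega> :: "'v::euclidean_space \<Rightarrow> 'v \<Rightarrow> real" and n :: nat
  assumes sp: "symplectic_space \<omega> n"
begin

lemma bil: "bilinear \<omega>" using sp unfolding symplectic_space_def by blast
lemma asym: "\<omega> u v = - \<omega> v u" using sp unfolding symplectic_space_def by blast
lemma nondeg: "(\<And>v. \<omega> u v = 0) \<Longrightarrow> u = 0" using sp unfolding symplectic_space_def by blast
lemma dimV: "DIM('v) = 2 * n" using sp unfolding symplectic_space_def by blast

lemma w_simps[simp]:
  "\<omega> (x + y) z = \<omega> x z + \<omega> y z" "\<omega> x (y + z) = \<omega> x y + \<omega> x z"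
  "\<omega> (x - y) z = \<omega> x z - \<omega> y z" "\<omega> x (y - z) = \<omega> x y - \<omega> x z"
  "\<omega> (c *\<^sub>R x) y = c * \<omega> x y" "\<omega> x (c *\<^sub>R y) = c * \<omega> x y"
  "\<omega> (- x) y = - \<omega> x y" "\<omega> x (- y) = - \<omega> x y"
  "\<omega> 0 y = 0" "\<omega> x 0 = 0" "\<omega> x x = 0"
  using bilinear_ladd[OF bil] bilinear_radd[OF bil] bilinear_lsub[OF bil] bilinear_rsub[OF bil]
    bilinear_lmul[OF bil, of c x y] bilinear_rmul[OF bil, of x c y]
    bilinear_lneg[OF bil] bilinear_rneg[OF bil] bilinear_lzero[OF bil] bilinear_rzero[OF bil] asym[of x x]
  by auto

lemma lin2: "linear (\<omega> x)" using bil by (simp add: bilinear_def)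
lemma lin1: "linear (\<lambda>x. \<omega> x y)" using bil by (simp add: bilinear_def)

definition J :: "'v \<Rightarrow> 'v" where "J y = (\<Sum>b\<in>Basis. \<omega> y b *\<^sub>R b)"

lemma J_inner: "J y \<bullet> c = \<omega> y c"
proof -
  have "\<omega> y c = \<omega> y (\<Sum>b\<in>Basis. (c \<bullet> b) *\<^sub>R b)" by (simp add: euclidean_representation)
  also have "\<dots> = (\<Sum>b\<in>Basis. (c \<bullet> b) * \<omega> y b)"
    using lin2[of y] by (simp add: linear_sum linear_scale)
  also have "\<dots> = J y \<bullet> c" unfolding J_def inner_sum_left
    by (rule sum.cong) (simp_all add: inner_commute)
  finally show ?thesis by simp
qed

lemma J_linear: "linear J"
  unfolding J_def by (rule linearI) (simp_all add: scaleR_add_left sum.distrib scaleR_sum_right)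

lemma J_inj: "inj J"
proof (rule injI)
  fix x y assume "J x = J y"
  then have "\<And>c. \<omega> (x - y) c = 0" using J_inner by (metis right_minus_eq w_simps(3))
  then have "x - y = 0" by (rule nondeg)
  then show "x = y" by simp
qed

lemma iso_dim:
  assumes W: "subspace W" and iso: "\<forall>u\<in>W. \<forall>v\<in>W. \<omega> u v = 0"
  shows "dim W \<le> n"
proof -
  let ?K = "J ` W"
  have K: "subspace ?K" using J_linear W by (rule linear_subspace_image)
  have dK: "dim ?K = dim W"
    using J_linear J_inj by (metis dim_image_eq inj_on_subset subset_UNIV)
  have I: "W \<inter> ?K = {0}"
  proof
    show "W \<inter> ?K \<subseteq> {0}"
    proof
      fix x assume x: "x \<in> W \<inter> ?K"
      then obtain w where w: "w \<in> W" "x = J w" by auto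
      have "x \<bullet> x = \<omega> w x" using w J_inner by simp
      also have "\<dots> = 0" using iso w x by simp
      finally show "x \<in> {0}" by simp
    qed
    show "{0} \<subseteq> W \<inter> ?K" using W K by (simp add: subspace_0)
  qed
  have "dim {x + y |x y. x \<in> W \<and> y \<in> ?K} + dim (W \<inter> ?K) = dim W + dim ?K"
    by (rule dim_sums_Int[OF W K])
  moreover have "dim {x + y |x y. x \<in> W \<and> y \<in> ?K} \<le> DIM('v)" by (rule dim_subset_UNIV)
  ultimately show ?thesis using I dK dimV by simp
qed

lemma iso_in:
  assumes N: "lagrangian \<omega> n N" and b: "\<forall>c\<in>N. \<omega> b c = 0"
  shows "b \<in> N"
proof (rule ccontr)
  assume bN: "b \<notin> N"
  have sN: "subspace N" and dN: "dim N = n" and iN: "\<forall>u\<in>N. \<forall>v\<in>N. \<omega> u v = 0"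
    using N by (auto simp: lagrangian_def)
  have b0: "b \<noteq> 0" using bN sN subspace_0 by auto
  let ?S = "span {b}"
  let ?W = "{x + y |x y. x \<in> N \<and> y \<in> ?S}"
  have W: "subspace ?W" using sN by (simp add: subspace_sums)
  have I: "N \<inter> ?S = {0}"
  proof
    show "N \<inter> ?S \<subseteq> {0}"
    proof
      fix x assume x: "x \<in> N \<inter> ?S"
      then obtain t where t: "x = t *\<^sub>R b" by (auto simp: span_singleton)
      show "x \<in> {0}"
      proof (cases "t = 0")
        case True then show ?thesis using t by simp
      next
        case False
        then have "b = (1 / t) *\<^sub>R x" using t by simp
        then have "b \<in> N" using x sN by (simp add: subspace_scale)
        then show ?thesis using bN by simp
      qed
    qed
    show "{0} \<subseteq> N \<inter> ?S" using sN by (simp add: subspace_0 span_zero)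
  qed
  have "dim ?W + dim (N \<inter> ?S) = dim N + dim ?S" by (rule dim_sums_Int[OF sN subspace_span])
  then have dW: "dim ?W = n + 1" using I dN b0 by simp
  have iso: "\<forall>u\<in>?W. \<forall>v\<in>?W. \<omega> u v = 0"
  proof (intro ballI)
    fix u v assume "u \<in> ?W" "v \<in> ?W"
    then obtain x s x' s' where u: "u = x + s *\<^sub>R b" "x \<in> N" and v: "v = x' + s' *\<^sub>R b" "x' \<in> N"
      by (auto simp: span_singleton)
    have "\<omega> x b = 0" using b u(2) asym[of x b] by simp
    then show "\<omega> u v = 0" using u v b iN by simp
  qed
  have "dim ?W \<le> n" by (rule iso_dim[OF W iso])
  then show False using dW by simp
qed

end

lemma dims_finite: "finite {dim U | U. subspace U \<and> U \<subseteq> (W::'w::euclidean_space set) \<and> P U}"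
proof -
  have "{dim U | U. subspace U \<and> U \<subseteq> W \<and> P U} \<subseteq> {..DIM('w)}"
  proof
    fix x assume "x \<in> {dim U | U. subspace U \<and> U \<subseteq> W \<and> P U}"
    then obtain U :: "'w set" where "x = dim U" by blast
    moreover have "dim U \<le> DIM('w)" by (rule dim_subset_UNIV)
    ultimately show "x \<in> {..DIM('w)}" by simp
  qed
  then show ?thesis using finite_subset by blast
qed

lemma pos_index_le:
  fixes q :: "'w::euclidean_space \<Rightarrow> real"
  assumes W: "subspace W"
    and H: "\<And>U. subspace U \<Longrightarrow> U \<subseteq> W \<Longrightarrow> (\<forall>u\<in>U. u \<noteq> 0 \<longrightarrow> q u > 0) \<Longrightarrow> dim U \<le> k"
  shows "pos_index q W \<le> k"
proof -
  let ?S = "{dim U | U. subspace U \<and> U \<subseteq> W \<and> (\<forall>u\<in>U. u \<noteq> 0 \<longrightarrow> q u > 0)}"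
  have f: "finite ?S" by (rule dims_finite)
  have "subspace {0::'w} \<and> {0} \<subseteq> W \<and> (\<forall>u\<in>{0::'w}. u \<noteq> 0 \<longrightarrow> q u > 0)"
    using W by (simp add: subspace_0)
  then have "dim {0::'w} \<in> ?S" by blast
  then have ne: "?S \<noteq> {}" by auto
  have "\<forall>x\<in>?S. x \<le> k" using H by auto
  then show ?thesis unfolding pos_index_def using f ne by simp
qed

lemma neg_index_ge:
  fixes q :: "'w::euclidean_space \<Rightarrow> real"
  assumes "subspace U" "U \<subseteq> W" "\<forall>u\<in>U. u \<noteq> 0 \<longrightarrow> q u < 0"
  shows "dim U \<le> neg_index q W"
proof -
  let ?S = "{dim U | U. subspace U \<and> U \<subseteq> W \<and> (\<forall>u\<in>U. u \<noteq> 0 \<longrightarrow> q u < 0)}"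
  have f: "finite ?S" by (rule dims_finite)
  have "dim U \<in> ?S" using assms by blast
  then show ?thesis unfolding neg_index_def using f by simp
qed


context symp begin

lemma lag_sub: "lagrangian \<omega> n L \<Longrightarrow> subspace L" by (simp add: lagrangian_def)
lemma lag_dim: "lagrangian \<omega> n L \<Longrightarrow> dim L = n" by (simp add: lagrangian_def)
lemma lag_iso: "lagrangian \<omega> n L \<Longrightarrow> u \<in> L \<Longrightarrow> v \<in> L \<Longrightarrow> \<omega> u v = 0" by (simp add: lagrangian_def)

lemma n_pos: "n \<ge> 1"
  using dimV DIM_positive[where 'a='v] by linarith

lemma alg:
  assumes A: "lagrangian \<omega> n A" and B: "lagrangian \<omega> n B" and N: "lagrangian \<omega> n N"
    and BN: "B \<inter> N = {0}" and mas: "maslov \<omega> A B N = int n"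
    and u: "u \<in> A" and w: "w \<in> B" and uw: "u - w \<in> N" and nz: "u \<noteq> 0 \<or> w \<noteq> 0"
  shows "\<omega> u w > 0"
proof (rule ccontr)
  assume "\<not> \<omega> u w > 0"
  then have neg: "\<omega> u w \<le> 0" by simp
  define Q where "Q = (\<lambda>(x1::'v, x2::'v, x3::'v). \<omega> x1 x2 + \<omega> x2 x3 + \<omega> x3 x1)"
  define S where "S = A \<times> B \<times> N"
  have sA: "subspace A" and sB: "subspace B" and sN: "subspace N"
    using A B N lag_sub by auto
  have sS: "subspace S" unfolding S_def using sA sB sN by (simp add: subspace_Times)
  have dS: "dim S = 3 * n"
  proof -
    have "dim S = dim A + dim (B \<times> N)" unfolding S_def
      using sA sB sN by (simp add: dim_Times subspace_Times)
    also have "\<dots> = dim A + dim B + dim N" using sB sN by (simp add: dim_Times)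
    finally show ?thesis using A B N lag_dim by simp
  qed
  have Qv: "Q (a, b, c) = \<omega> a b + \<omega> b c + \<omega> c a" for a b c unfolding Q_def by simp
  define f3 where "f3 = (\<lambda>c::'v. ((0::'v), (0::'v), c))"
  have lf3: "linear f3" unfolding f3_def by (rule linearI) simp_all
  define N3 where "N3 = f3 ` N"
  have sN3: "subspace N3" unfolding N3_def using lf3 sN by (rule linear_subspace_image)
  have dN3: "dim N3 = n"
  proof -
    have "inj f3" unfolding f3_def by (rule injI) simp
    then have "dim N3 = dim N" unfolding N3_def using lf3 by (metis dim_image_eq inj_on_subset subset_UNIV)
    then show ?thesis using N lag_dim by simp
  qed
  define p where "p = (u, w, (0::'v))"
  have p0: "p \<noteq> 0" using nz unfolding p_def by (auto simp: zero_prod_def)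
  define Wle where "Wle = {x + y |x y. x \<in> N3 \<and> y \<in> span {p}}"
  have sWle: "subspace Wle" unfolding Wle_def by (rule subspace_sums[OF sN3 subspace_span])
  have I1: "N3 \<inter> span {p} = {0}"
  proof
    show "N3 \<inter> span {p} \<subseteq> {0}"
    proof
      fix x assume x: "x \<in> N3 \<inter> span {p}"
      then obtain t where t: "x = t *\<^sub>R p" by (auto simp: span_singleton)
      obtain c where c: "x = f3 c" using x N3_def by auto
      have "t *\<^sub>R u = 0" "t *\<^sub>R w = 0" using t c unfolding f3_def p_def by auto
      then have "t = 0" using nz by auto
      then show "x \<in> {0}" using t by simp
    qed
    show "{0} \<subseteq> N3 \<inter> span {p}" using sN3 by (simp add: subspace_0 span_zero)
  qed
  have dWle: "dim Wle = n + 1"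
  proof -
    have "dim Wle + dim (N3 \<inter> span {p}) = dim N3 + dim (span {p})"
      unfolding Wle_def by (rule dim_sums_Int[OF sN3 subspace_span])
    then show ?thesis using I1 dN3 p0 by simp
  qed
  have WleS: "Wle \<subseteq> S"
  proof
    fix x assume xW: "x \<in> Wle"
    obtain y z where yz: "x = y + z" "y \<in> N3" "z \<in> span {p}" using xW unfolding Wle_def by blast
    obtain c where c: "y = f3 c" "c \<in> N" using yz(2) unfolding N3_def by blast
    obtain t where t: "z = t *\<^sub>R p" using yz(3) by (auto simp: span_singleton)
    have x: "x = f3 c + t *\<^sub>R p" "c \<in> N" using yz c t by auto
    then show "x \<in> S" unfolding S_def f3_def p_def using u w sA sB
      by (simp add: subspace_scale)
  qed
  have Qle: "Q x \<le> 0" if xW: "x \<in> Wle" for x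
  proof -
    obtain y z where yz: "x = y + z" "y \<in> N3" "z \<in> span {p}" using xW unfolding Wle_def by blast
    obtain c where c: "y = f3 c" "c \<in> N" using yz(2) unfolding N3_def by blast
    obtain t where t: "z = t *\<^sub>R p" using yz(3) by (auto simp: span_singleton)
    have x: "x = f3 c + t *\<^sub>R p" "c \<in> N" using yz c t by auto
    have e1: "\<omega> c (u - w) = 0" using lag_iso[OF N x(2) uw] .
    have e2: "\<omega> w c = - \<omega> c w" by (rule asym)
    have "Q x = t * t * \<omega> u w + t * (\<omega> w c + \<omega> c u)"
      using x unfolding f3_def p_def by (simp add: Qv algebra_simps)
    also have "\<omega> w c + \<omega> c u = 0" using e1 e2 by simp
    finally have "Q x = (t * t) * \<omega> u w" by simp
    moreover have "t * t \<ge> 0" by simp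
    ultimately show ?thesis using neg by (simp add: mult_nonneg_nonpos)
  qed
  have pos_le: "pos_index Q S \<le> 2 * n - 1"
  proof (rule pos_index_le[OF sS])
      fix U assume U: "subspace U" "U \<subseteq> S" "\<forall>u\<in>U. u \<noteq> 0 \<longrightarrow> Q u > 0"
      have I: "U \<inter> Wle = {0}"
      proof
        show "U \<inter> Wle \<subseteq> {0}"
        proof
          fix x assume x: "x \<in> U \<inter> Wle"
          show "x \<in> {0}"
          proof (rule ccontr)
            assume "x \<notin> {0}"
            then have "Q x > 0" using U(3) x by auto
            moreover have "Q x \<le> 0" using Qle x by auto
            ultimately show False by simp
          qed
        qed
        show "{0} \<subseteq> U \<inter> Wle" using U(1) sWle by (simp add: subspace_0)
      qed
      have "dim {x + y |x y. x \<in> U \<and> y \<in> Wle} + dim (U \<inter> Wle) = dim U + dim Wle"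
        by (rule dim_sums_Int[OF U(1) sWle])
      moreover have "{x + y |x y. x \<in> U \<and> y \<in> Wle} \<subseteq> S"
      proof
        fix z assume "z \<in> {x + y |x y. x \<in> U \<and> y \<in> Wle}"
        then obtain x y where "z = x + y" "x \<in> U" "y \<in> Wle" by blast
        then show "z \<in> S" using U(2) WleS sS by (meson subsetD subspace_add)
      qed
      then have "dim {x + y |x y. x \<in> U \<and> y \<in> Wle} \<le> dim S"
        by (rule dim_subset)
      then have "dim {x + y |x y. x \<in> U \<and> y \<in> Wle} \<le> 3 * n"
        using dS by simp
      ultimately show "dim U \<le> 2 * n - 1" using I dWle by simp
  qed
  define r where "r = (\<lambda>b. oproj N (J b))"
  have rN: "r b \<in> N" for b unfolding r_def using oproj_ex[OF sN] by blast
  have rorth: "(J b - r b) \<bullet> c = 0" if "c \<in> N" for b c unfolding r_def using oproj_ex[OF sN] that by blast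
  have lr: "linear r" unfolding r_def using oproj_linear[OF sN] J_linear by (simp add: linear_compose[unfolded o_def])
  define g where "g = (\<lambda>b. ((0::'v), b, - r b))"
  have lg: "linear g" unfolding g_def using lr
    by (intro linearI) (simp_all add: linear_add[OF lr] linear_scale[OF lr])
  define Wlt where "Wlt = g ` B"
  have sWlt: "subspace Wlt" unfolding Wlt_def using lg sB by (rule linear_subspace_image)
  have dWlt: "dim Wlt = n"
  proof -
    have "inj g" unfolding g_def by (rule injI) simp
    then have "dim Wlt = dim B" unfolding Wlt_def using lg by (metis dim_image_eq inj_on_subset subset_UNIV)
    then show ?thesis using B lag_dim by simp
  qed
  have WltS: "Wlt \<subseteq> S" unfolding Wlt_def S_def g_def using sA sB sN rN
    by (auto simp: subspace_0 subspace_neg)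
  have Qlt: "Q x < 0" if xW: "x \<in> Wlt" "x \<noteq> 0" for x
  proof -
    obtain b where b: "b \<in> B" "x = g b" using xW unfolding Wlt_def by auto
    have b0: "b \<noteq> 0" using b xW unfolding g_def by (auto simp: zero_prod_def linear_0[OF lr])
    have rb0: "r b \<noteq> 0"
    proof
      assume r0: "r b = 0"
      have "\<forall>c\<in>N. \<omega> b c = 0"
      proof
        fix c assume "c \<in> N"
        have "\<omega> b c = J b \<bullet> c" by (simp add: J_inner)
        also have "\<dots> = (J b - r b) \<bullet> c" using r0 by simp
        also have "\<dots> = 0" using rorth[OF \<open>c \<in> N\<close>] .
        finally show "\<omega> b c = 0" .
      qed
      then have "b \<in> N" using iso_in[OF N] by blast
      then show False using BN b b0 by auto
    qed
    have "Q x = - \<omega> b (r b)" using b unfolding g_def by (simp add: Qv)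
    also have "\<omega> b (r b) = J b \<bullet> r b" by (simp add: J_inner)
    also have "\<dots> = (J b - r b) \<bullet> r b + r b \<bullet> r b" by (simp add: inner_diff_left)
    also have "\<dots> = r b \<bullet> r b" using rorth[OF rN] by simp
    finally have "Q x = - (r b \<bullet> r b)" .
    then show ?thesis using rb0 by simp
  qed
  have neg_ge: "n \<le> neg_index Q S"
    using neg_index_ge[OF sWlt WltS] Qlt dWlt by auto
  have "maslov \<omega> A B N = int (pos_index Q S) - int (neg_index Q S)"
    unfolding maslov_def signature_def Q_def S_def by simp
  then have "maslov \<omega> A B N \<le> int n - 1" using pos_le neg_ge n_pos by linarith
  then show False using mas by simp
qed

end

context symp begin

lemma dec:
  assumes Y: "lagrangian \<omega> n Y" and N: "lagrangian \<omega> n N" and YN: "Y \<inter> N = {0}"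
  shows "\<exists>P. linear P \<and> (\<forall>x. P x \<in> Y \<and> x - P x \<in> N)"
proof -
  have sY: "subspace Y" and sN: "subspace N" using Y N lag_sub by auto
  let ?T = "{x + y |x y. x \<in> Y \<and> y \<in> N}"
  have sT: "subspace ?T" by (rule subspace_sums[OF sY sN])
  have "dim ?T + dim (Y \<inter> N) = dim Y + dim N" by (rule dim_sums_Int[OF sY sN])
  moreover have "dim (Y \<inter> N) = 0" using YN by simp
  moreover have "dim Y = n" "dim N = n" using Y N lag_dim by auto
  ultimately have "dim ?T = DIM('v)" using dimV by linarith
  then have "span ?T = UNIV" by (simp add: dim_eq_full)
  moreover have "span ?T = ?T" using sT by (rule span_eq_iff[THEN iffD2])
  ultimately have TU: "?T = UNIV" by simp
  have ex: "\<exists>y. y \<in> Y \<and> x - y \<in> N" for x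
  proof -
    have "x \<in> ?T" using TU by simp
    then obtain a b where ab: "x = a + b" "a \<in> Y" "b \<in> N" by blast
    then have "x - a = b" by simp
    then show ?thesis using ab by blast
  qed
  have uniq: "y1 = y2" if "y1 \<in> Y" "x - y1 \<in> N" "y2 \<in> Y" "x - y2 \<in> N" for x y1 y2
  proof -
    have "y1 - y2 \<in> Y" using that sY by (simp add: subspace_diff)
    moreover have "(x - y2) - (x - y1) \<in> N" using subspace_diff[OF sN that(4) that(2)] .
    moreover have "(x - y2) - (x - y1) = y1 - y2" by simp
    ultimately have "y1 - y2 \<in> Y \<inter> N" by simp
    then show ?thesis using YN by simp
  qed
  define P where "P x = (SOME y. y \<in> Y \<and> x - y \<in> N)" for x
  have Pp: "P x \<in> Y \<and> x - P x \<in> N" for x unfolding P_def using ex[of x] by (rule someI_ex)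
  have "linear P"
  proof (rule linearI)
    fix x y
    have "P x + P y \<in> Y" using Pp sY by (simp add: subspace_add)
    moreover have "(x + y) - (P x + P y) \<in> N"
    proof -
      have "(x - P x) + (y - P y) \<in> N" using Pp sN by (simp add: subspace_add)
      moreover have "(x - P x) + (y - P y) = (x + y) - (P x + P y)" by simp
      ultimately show ?thesis by simp
    qed
    ultimately show "P (x + y) = P x + P y" using uniq[of "P (x + y)" "x + y" "P x + P y"] Pp[of "x + y"] by blast
  next
    fix c x
    have "c *\<^sub>R P x \<in> Y" using Pp sY by (simp add: subspace_scale)
    moreover have "c *\<^sub>R x - c *\<^sub>R P x \<in> N"
    proof -
      have "c *\<^sub>R (x - P x) \<in> N" using Pp sN by (simp add: subspace_scale)
      then show ?thesis by (simp add: scaleR_diff_right)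
    qed
    ultimately show "P (c *\<^sub>R x) = c *\<^sub>R P x" using uniq[of "P (c *\<^sub>R x)" "c *\<^sub>R x" "c *\<^sub>R P x"] Pp[of "c *\<^sub>R x"] by blast
  qed
  then show ?thesis using Pp by blast
qed

lemma limit_ineq:
  fixes c :: real
  assumes lP: "linear P" and L1: "subspace L1" and v: "v \<in> L1"
    and H: "\<forall>e>0. \<exists>L. subspace L \<and> norm (lproj L - lproj L1) < e \<and> (\<forall>u\<in>L. c * \<omega> u (P u) \<ge> 0)"
  shows "c * \<omega> v (P v) \<ge> 0"
proof (rule ccontr)
  assume "\<not> c * \<omega> v (P v) \<ge> 0"
  then have neg: "c * \<omega> v (P v) < 0" by simp
  define f where "f u = c * \<omega> u (P u)" for u
  have bb: "bounded_bilinear \<omega>" using bil bilinear_conv_bounded_bilinear by blast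
  have cP: "isCont P v" using lP by (simp add: linear_continuous_at linear_conv_bounded_linear)
  have "isCont (\<lambda>u. \<omega> u (P u)) v" by (rule bounded_bilinear.isCont[OF bb continuous_ident cP])
  then have "isCont f v" unfolding f_def by (intro continuous_intros)
  then have ed: "\<forall>\<epsilon>>0. \<exists>\<delta>>0. \<forall>x'. dist x' v < \<delta> \<longrightarrow> dist (f x') (f v) < \<epsilon>"
    by (simp only: continuous_at_eps_delta)
  have fv: "- f v > 0" using neg unfolding f_def by simp
  obtain d where d: "d > 0" "\<forall>u. dist u v < d \<longrightarrow> dist (f u) (f v) < - f v"
    using ed fv by blast
  define e where "e = d / (norm v + 1)"
  have e: "e > 0" using d by (simp add: e_def add_nonneg_pos)
  obtain L where L: "subspace L" "norm (lproj L - lproj L1) < e" "\<forall>u\<in>L. c * \<omega> u (P u) \<ge> 0"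
    using H e by blast
  define u where "u = oproj L v"
  have uL: "u \<in> L" unfolding u_def using oproj_ex[OF L(1)] by blast
  have "norm (u - v) \<le> norm (lproj L - lproj L1) * norm v" unfolding u_def by (rule lproj_close[OF L1 L(1) v])
  also have "\<dots> \<le> e * norm v" using L(2) by (simp add: mult_right_mono)
  also have "\<dots> < d"
  proof -
    have "e * norm v = d * (norm v / (norm v + 1))" unfolding e_def by simp
    also have "\<dots> < d * 1"
    proof (rule mult_strict_left_mono[OF _ d(1)])
      have "0 < norm v + 1" by (simp add: add_nonneg_pos)
      then show "norm v / (norm v + 1) < 1" by (simp add: divide_less_eq)
    qed
    finally show ?thesis by simp
  qed
  finally have "dist u v < d" by (simp add: dist_norm)
  then have "dist (f u) (f v) < - f v" using d by blast
  then have "f u < 0" by (simp add: dist_real_def abs_less_iff)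
  moreover have "f u \<ge> 0" unfolding f_def using L(3) uL by blast
  ultimately show False by simp
qed

end

context symp begin

lemma core:
  assumes L1: "lagrangian \<omega> n L1" and L2: "lagrangian \<omega> n L2" and N: "lagrangian \<omega> n N"
    and Y: "lagrangian \<omega> n Y" and Y': "lagrangian \<omega> n Y'"
    and L1N: "L1 \<inter> N = {0}" and YN: "Y \<inter> N = {0}" and Y'N: "Y' \<inter> N = {0}"
    and strict: "maslov \<omega> Y Y' N = int n"
    and H1: "\<forall>e>0. \<exists>L. lagrangian \<omega> n L \<and> norm (lproj L - lproj L1) < e \<and> maslov \<omega> L Y N = int n"
    and H2: "\<forall>e>0. \<exists>L. lagrangian \<omega> n L \<and> L \<inter> N = {0} \<and> norm (lproj L - lproj L2) < e \<and> maslov \<omega> Y' L N = int n"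
  shows "L1 \<inter> L2 = {0}"
proof (rule ccontr)
  assume "L1 \<inter> L2 \<noteq> {0}"
  moreover have "0 \<in> L1 \<inter> L2" using L1 L2 lag_sub subspace_0 by blast
  ultimately obtain v where v: "v \<in> L1" "v \<in> L2" "v \<noteq> 0" by blast
  have sL1: "subspace L1" and sL2: "subspace L2" and sN: "subspace N" using L1 L2 N lag_sub by auto
  obtain P where P: "linear P" "\<forall>x. P x \<in> Y \<and> x - P x \<in> N" using dec[OF Y N YN] by blast
  obtain P' where P': "linear P'" "\<forall>x. P' x \<in> Y' \<and> x - P' x \<in> N" using dec[OF Y' N Y'N] by blast
  have i1: "1 * \<omega> v (P v) \<ge> 0"
  proof (rule limit_ineq[OF P(1) sL1 v(1)], intro allI impI)
    fix e :: real assume "e > 0"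
    then obtain L where L: "lagrangian \<omega> n L" "norm (lproj L - lproj L1) < e" "maslov \<omega> L Y N = int n"
      using H1 by blast
    have "\<forall>u\<in>L. 1 * \<omega> u (P u) \<ge> 0"
    proof
      fix u assume u: "u \<in> L"
      show "1 * \<omega> u (P u) \<ge> 0"
      proof (cases "u = 0 \<and> P u = 0")
        case True then show ?thesis by simp
      next
        case False
        have "\<omega> u (P u) > 0"
          by (rule alg[OF L(1) Y N YN L(3) u]) (use P False in auto)
        then show ?thesis by simp
      qed
    qed
    then show "\<exists>L. subspace L \<and> norm (lproj L - lproj L1) < e \<and> (\<forall>u\<in>L. 1 * \<omega> u (P u) \<ge> 0)"
      using L lag_sub by blast
  qed
  have i2: "(-1) * \<omega> v (P' v) \<ge> 0"
  proof (rule limit_ineq[OF P'(1) sL2 v(2)], intro allI impI)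
    fix e :: real assume "e > 0"
    then obtain L where L: "lagrangian \<omega> n L" "L \<inter> N = {0}" "norm (lproj L - lproj L2) < e" "maslov \<omega> Y' L N = int n"
      using H2 by blast
    have "\<forall>u\<in>L. (-1) * \<omega> u (P' u) \<ge> 0"
    proof
      fix u assume u: "u \<in> L"
      show "(-1) * \<omega> u (P' u) \<ge> 0"
      proof (cases "P' u = 0 \<and> u = 0")
        case True then show ?thesis by simp
      next
        case False
        have m: "P' u - u \<in> N"
        proof -
          have "- (u - P' u) \<in> N" using P'(2) sN subspace_neg by blast
          then show ?thesis by simp
        qed
        have "\<omega> (P' u) u > 0"
          by (rule alg[OF Y' L(1) N L(2) L(4) _ u m]) (use P' False in auto)
        then show ?thesis using asym[of u "P' u"] by simp
      qed
    qed
    then show "\<exists>L. subspace L \<and> norm (lproj L - lproj L2) < e \<and> (\<forall>u\<in>L. (-1) * \<omega> u (P' u) \<ge> 0)"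
      using L lag_sub by blast
  qed
  define w where "w = P v"
  define w' where "w' = P' v"
  define m1 where "m1 = v - w"
  define m2 where "m2 = v - w'"
  have m1N: "m1 \<in> N" unfolding m1_def w_def using P(2) by blast
  have m2N: "m2 \<in> N" unfolding m2_def w'_def using P'(2) by blast
  have wY: "w \<in> Y" unfolding w_def using P(2) by blast
  have w'Y: "w' \<in> Y'" unfolding w'_def using P'(2) by blast
  have w0: "w \<noteq> 0"
  proof
    assume "w = 0"
    then have "v \<in> N" using m1N unfolding m1_def by simp
    then show False using L1N v by blast
  qed
  have ww: "w - w' \<in> N"
  proof -
    have "m2 - m1 \<in> N" using m1N m2N sN by (simp add: subspace_diff)
    moreover have "m2 - m1 = w - w'" unfolding m1_def m2_def by simp
    ultimately show ?thesis by simp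
  qed
  have s: "\<omega> w w' > 0" by (rule alg[OF Y Y' N Y'N strict wY w'Y ww]) (use w0 in simp)
  have e0: "\<omega> m1 m2 = 0" using lag_iso[OF N m1N m2N] .
  have vw: "w = v - m1" "w' = v - m2" unfolding m1_def m2_def by simp_all
  have "\<omega> w w' = \<omega> v m1 - \<omega> v m2"
    unfolding vw using e0 asym[of m1 v] by simp
  moreover have "\<omega> v w = - \<omega> v m1" unfolding vw by simp
  moreover have "\<omega> v w' = - \<omega> v m2" unfolding vw by simp
  ultimately show False using i1 i2 s unfolding w_def w'_def by simp
qed

end

lemma sel_measure:
  assumes S: "emeasure M S > 0" and P: "AE t in M. P t"
  shows "\<exists>t\<in>S. P t"
proof (rule ccontr)
  assume "\<not> (\<exists>t\<in>S. P t)"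
  then have sub: "S \<subseteq> {t. \<not> P t}" by auto
  have "\<exists>N\<in>null_sets M. {t \<in> space M. \<not> P t} \<subseteq> N" using P by (simp only: eventually_ae_filter)
  then obtain N0 where N0: "{t \<in> space M. \<not> P t} \<subseteq> N0" "N0 \<in> null_sets M" by blast
  show False
  proof (cases "S \<in> sets M")
    case True
    then have "S \<subseteq> space M" by (rule sets.sets_into_space)
    then have "S \<subseteq> N0" using sub N0(1) by auto
    then have "emeasure M S \<le> emeasure M N0" using N0(2) by (intro emeasure_mono) auto
    moreover have "emeasure M N0 = 0" using N0(2) by auto
    ultimately show False using S by simp
  next
    case False
    then have "emeasure M S = 0" by (rule emeasure_notin_sets)
    then show False using S by simp
  qed
qed

lemma sel_ioo:
  fixes a b :: real
  assumes "a < b" "AE t in lborel. P t"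
  shows "\<exists>t. a < t \<and> t < b \<and> P t"
proof -
  have "emeasure lborel {a<..<b} > 0" using assms(1) by simp
  then have "\<exists>t\<in>{a<..<b}. P t" by (rule sel_measure[OF _ assms(2)])
  then show ?thesis by auto
qed

lemma AE_swap:
  assumes "AE p in (lborel::'a::euclidean_space measure) \<Otimes>\<^sub>M (lborel::'b::euclidean_space measure). P p"
  shows "AE p in (lborel::'b measure) \<Otimes>\<^sub>M (lborel::'a measure). P (snd p, fst p)"
proof -
  have "AE p in distr ((lborel::'b measure) \<Otimes>\<^sub>M (lborel::'a measure)) ((lborel::'a measure) \<Otimes>\<^sub>M (lborel::'b measure)) (\<lambda>(x, y). (y, x)). P p"
  proof -
    have eq: "(lborel::'a measure) \<Otimes>\<^sub>M (lborel::'b measure) = distr ((lborel::'b measure) \<Otimes>\<^sub>M (lborel::'a measure)) ((lborel::'a measure) \<Otimes>\<^sub>M (lborel::'b measure)) (\<lambda>(x, y). (y, x))"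
      by (rule lborel_pair.distr_pair_swap)
    show ?thesis by (subst eq[symmetric]) (rule assms)
  qed
  then have "AE p in (lborel::'b measure) \<Otimes>\<^sub>M (lborel::'a measure). P ((\<lambda>(x, y). (y, x)) p)"
    by (rule AE_distrD[OF measurable_pair_swap'])
  then show ?thesis by (simp add: case_prod_beta)
qed

lemma fub:
  fixes Mx :: "real \<Rightarrow> real \<Rightarrow> real \<Rightarrow> bool"
  assumes H: "AE p in (lborel :: (real \<times> real \<times> real) measure). Mx (fst p) (fst (snd p)) (snd (snd p))"
  shows "AE y in lborel. AE y' in lborel. AE z in lborel. Mx y y' z"
    and "AE y in lborel. AE z in lborel. AE a in lborel. Mx a y z"
    and "AE y' in lborel. AE z in lborel. AE c in lborel. Mx y' c z"
proof -
  have eq3: "(lborel::(real \<times> real \<times> real) measure) = (lborel::real measure) \<Otimes>\<^sub>M (lborel::(real \<times> real) measure)"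
    by (rule lborel_prod[symmetric])
  have eq2: "(lborel::(real \<times> real) measure) = (lborel::real measure) \<Otimes>\<^sub>M (lborel::real measure)"
    by (rule lborel_prod[symmetric])
  have H': "AE p in (lborel::real measure) \<Otimes>\<^sub>M (lborel :: (real \<times> real) measure). Mx (fst p) (fst (snd p)) (snd (snd p))"
    using H by (simp only: eq3)
  have H1: "AE y in lborel. AE q in (lborel :: (real \<times> real) measure). Mx y (fst q) (snd q)"
    using lborel_pair.AE_pair[OF H'] by simp
  show "AE y in lborel. AE y' in lborel. AE z in lborel. Mx y y' z"
  proof (rule eventually_mono[OF H1])
    fix y assume "AE q in (lborel :: (real \<times> real) measure). Mx y (fst q) (snd q)"
    then have "AE q in (lborel::real measure) \<Otimes>\<^sub>M (lborel::real measure). Mx y (fst q) (snd q)"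
      by (simp only: eq2)
    from lborel_pair.AE_pair[OF this] show "AE y' in lborel. AE z in lborel. Mx y y' z" by simp
  qed
  show "AE y' in lborel. AE z in lborel. AE c in lborel. Mx y' c z"
  proof (rule eventually_mono[OF H1])
    fix y assume "AE q in (lborel :: (real \<times> real) measure). Mx y (fst q) (snd q)"
    then have "AE q in (lborel::real measure) \<Otimes>\<^sub>M (lborel::real measure). Mx y (fst q) (snd q)"
      by (simp only: eq2)
    from AE_swap[OF this] have "AE q in (lborel::real measure) \<Otimes>\<^sub>M (lborel::real measure). Mx y (snd q) (fst q)"
      by simp
    from lborel_pair.AE_pair[OF this] show "AE z in lborel. AE c in lborel. Mx y c z" by simp
  qed
  have H2: "AE p in (lborel :: (real \<times> real) measure) \<Otimes>\<^sub>M (lborel::real measure). Mx (snd p) (fst (fst p)) (snd (fst p))"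
    using AE_swap[OF H'] by simp
  have H3: "AE q in (lborel :: (real \<times> real) measure). AE a in lborel. Mx a (fst q) (snd q)"
    using lborel_pair.AE_pair[OF H2] by simp
  then have "AE q in (lborel::real measure) \<Otimes>\<^sub>M (lborel::real measure). AE a in lborel. Mx a (fst q) (snd q)"
    by (simp only: eq2)
  from lborel_pair.AE_pair[OF this] show "AE y in lborel. AE z in lborel. AE a in lborel. Mx a y z" by simp
qed


lemma circ_cis: assumes "cmod x = 1" shows "x = cis (Arg x)"
proof -
  have "x \<noteq> 0" using assms by auto
  then have "cis (Arg x) = sgn x" by (rule cis_Arg)
  also have "\<dots> = x" using assms by (simp add: sgn_eq)
  finally show ?thesis by simp
qed

lemma angles:
  assumes "cmod x1 = 1" "cmod x2 = 1" "x1 \<noteq> x2"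
  shows "\<exists>t1 t2. x1 = cis t1 \<and> x2 = cis t2 \<and> t1 < t2 \<and> t2 < t1 + 2 * pi"
proof -
  let ?a = "Arg x1" and ?b = "Arg x2"
  have e1: "x1 = cis ?a" and e2: "x2 = cis ?b" using circ_cis assms by auto
  have ba: "- pi < ?a" "?a \<le> pi" "- pi < ?b" "?b \<le> pi" using Arg_bounded by auto
  have ne: "?a \<noteq> ?b" using e1 e2 assms(3) by metis
  show ?thesis
  proof (cases "?a < ?b")
    case True
    then show ?thesis using e1 e2 ba by (intro exI[of _ ?a] exI[of _ ?b]) auto
  next
    case False
    then have "?b < ?a" using ne by simp
    moreover have "cis (?b + 2 * pi) = cis ?b" by (simp add: cis_mult[symmetric])
    ultimately show ?thesis using e1 e2 ba by (intro exI[of _ ?a] exI[of _ "?b + 2 * pi"]) auto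
  qed
qed

lemma trig_pos:
  fixes a b :: real
  assumes "0 < a" "0 < b" "a + b < pi"
  shows "sin (2 * a) + sin (2 * b) - sin (2 * a + 2 * b) > 0"
proof -
  have id: "sin (2 * a) + sin (2 * b) - sin (2 * a + 2 * b) = 4 * sin a * sin b * sin (a + b)"
  proof -
    have s2: "sin (2 * a + 2 * b) = sin (2 * a) * cos (2 * b) + cos (2 * a) * sin (2 * b)" by (rule sin_add)
    have "sin (2 * a) + sin (2 * b) - sin (2 * a + 2 * b)
        = sin (2 * a) * (1 - cos (2 * b)) + sin (2 * b) * (1 - cos (2 * a))"
      unfolding s2 by (simp add: algebra_simps)
    also have "\<dots> = (2 * sin a * cos a) * (2 * sin b ^ 2) + (2 * sin b * cos b) * (2 * sin a ^ 2)"
      by (simp add: sin_double cos_double_sin)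
    also have "\<dots> = 4 * sin a * sin b * (sin a * cos b + cos a * sin b)"
      by (simp add: power2_eq_square algebra_simps)
    also have "\<dots> = 4 * sin a * sin b * sin (a + b)" by (simp add: sin_add)
    finally show ?thesis .
  qed
  have "sin a > 0" using assms by (intro sin_gt_zero) auto
  moreover have "sin b > 0" using assms by (intro sin_gt_zero) auto
  moreover have "sin (a + b) > 0" using assms by (intro sin_gt_zero) auto
  ultimately show ?thesis unfolding id by simp
qed

lemma orient:
  fixes \<alpha> \<beta> \<gamma> :: real
  assumes "\<alpha> < \<beta>" "\<beta> < \<gamma>" "\<gamma> < \<alpha> + 2 * pi"
  shows "Im (cnj (cis \<beta> - cis \<alpha>) * (cis \<gamma> - cis \<alpha>)) > 0"
proof -
  have "Im (cnj (cis \<beta> - cis \<alpha>) * (cis \<gamma> - cis \<alpha>))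
      = (cos \<beta> - cos \<alpha>) * (sin \<gamma> - sin \<alpha>) - (sin \<beta> - sin \<alpha>) * (cos \<gamma> - cos \<alpha>)"
    by (simp add: algebra_simps)
  also have "\<dots> = sin (\<gamma> - \<beta>) + sin (\<beta> - \<alpha>) - sin (\<gamma> - \<alpha>)"
    by (simp add: sin_diff algebra_simps)
  also have "\<dots> = sin (2 * ((\<beta> - \<alpha>) / 2)) + sin (2 * ((\<gamma> - \<beta>) / 2)) - sin (2 * ((\<beta> - \<alpha>) / 2) + 2 * ((\<gamma> - \<beta>) / 2))"
  proof -
    have h1: "2 * ((\<beta> - \<alpha>) / 2) = \<beta> - \<alpha>" and h2: "2 * ((\<gamma> - \<beta>) / 2) = \<gamma> - \<beta>" by simp_all
    have h3: "(\<beta> - \<alpha>) + (\<gamma> - \<beta>) = \<gamma> - \<alpha>" by simp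
    show ?thesis unfolding h1 h2 h3 by simp
  qed
  also have "\<dots> > 0" using assms by (intro trig_pos) (auto simp: field_simps)
  finally show ?thesis .
qed

lemma beta1_pos:
  assumes "Im (cnj (y - x) * (z - x)) > 0"
  shows "beta1 x y z = 1"
proof -
  have "x \<noteq> y" using assms by auto
  moreover have "x \<noteq> z" using assms by auto
  moreover have "y \<noteq> z"
  proof
    assume "y = z"
    then have "Im (cnj (y - x) * (z - x)) = 0" by (simp add: algebra_simps)
    then show False using assms by simp
  qed
  ultimately show ?thesis unfolding beta1_def using assms by simp
qed

lemma near_pos:
  fixes f :: "complex \<Rightarrow> real"
  assumes "isCont f x0" "f x0 > 0"
  shows "\<exists>e>0. \<forall>x. dist x x0 < e \<longrightarrow> f x > 0"
proof -
  have ed: "\<forall>\<epsilon>>0. \<exists>\<delta>>0. \<forall>x'. dist x' x0 < \<delta> \<longrightarrow> dist (f x') (f x0) < \<epsilon>"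
    using assms(1) by (simp only: continuous_at_eps_delta)
  obtain d where d: "d > 0" "\<forall>x'. dist x' x0 < d \<longrightarrow> dist (f x') (f x0) < f x0"
    using ed assms(2) by blast
  have "\<forall>x. dist x x0 < d \<longrightarrow> f x > 0"
  proof (intro allI impI)
    fix x assume "dist x x0 < d"
    then have "dist (f x) (f x0) < f x0" using d by blast
    then show "f x > 0" by (simp add: dist_real_def abs_less_iff)
  qed
  then show ?thesis using d by blast
qed


lemma isCont_Im_comp: "isCont g x0 \<Longrightarrow> isCont (\<lambda>x. Im (g x)) x0"
  by (rule bounded_linear.isCont[OF bounded_linear_Im])

lemma near_im1:
  assumes "Im (cnj (a - x0) * (b - x0)) > 0"
  shows "\<exists>e>0. \<forall>x. dist x x0 < e \<longrightarrow> Im (cnj (a - x) * (b - x)) > 0"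
proof -
  have "isCont (\<lambda>x. cnj (a - x) * (b - x)) x0" by (intro continuous_intros)
  then have c: "isCont (\<lambda>x. Im (cnj (a - x) * (b - x))) x0" by (rule isCont_Im_comp)
  show ?thesis using near_pos[OF c] assms by simp
qed

lemma near_im2:
  assumes "Im (cnj (x0 - a) * (b - a)) > 0"
  shows "\<exists>e>0. \<forall>x. dist x x0 < e \<longrightarrow> Im (cnj (x - a) * (b - a)) > 0"
proof -
  have "isCont (\<lambda>x. cnj (x - a) * (b - a)) x0" by (intro continuous_intros)
  then have c: "isCont (\<lambda>x. Im (cnj (x - a) * (b - a))) x0" by (rule isCont_Im_comp)
  show ?thesis using near_pos[OF c] assms by simp
qed

theorem lemma8p4:
  fixes \<omega> :: "'v::euclidean_space \<Rightarrow> 'v \<Rightarrow> real" and n :: nat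
    and \<Gamma> :: "(complex \<times> complex) set"
    and \<rho> :: "complex \<times> complex \<Rightarrow> 'v \<Rightarrow> 'v"
    and \<phi> :: "complex \<Rightarrow> 'v set"
    and x1 x2 :: complex and L1 L2 :: "'v set"
  assumes symp: "symplectic_space \<omega> n"
    and lattice: "torsion_free_cocompact_lattice \<Gamma>"
    and rho_sp: "\<forall>g\<in>\<Gamma>. symplectic_map \<omega> (\<rho> g)"
    and rho_hom: "\<forall>g\<in>\<Gamma>. \<forall>h\<in>\<Gamma>. \<rho> (su11_mult g h) = \<rho> g \<circ> \<rho> h"
    and rho_proj: "\<forall>g\<in>\<Gamma>. \<rho> (su11_neg g) = \<rho> g"
    and phi_lag: "\<forall>z\<in>sphere 0 1. lagrangian \<omega> n (\<phi> z)"
    and phi_meas: "(\<lambda>t. lproj (\<phi> (cis t))) \<in> borel_measurable lebesgue"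
    and phi_equiv: "\<forall>g\<in>\<Gamma>. AE t in lebesgue. \<phi> (pu11_act g (cis t)) = \<rho> g ` \<phi> (cis t)"
    and maximal: "AE p in (lborel :: (real \<times> real \<times> real) measure).
        maslov \<omega> (\<phi> (cis (fst p))) (\<phi> (cis (fst (snd p)))) (\<phi> (cis (snd (snd p))))
          = int n * beta1 (cis (fst p)) (cis (fst (snd p))) (cis (snd (snd p)))"
    and transv: "\<forall>L. lagrangian \<omega> n L \<longrightarrow> (AE t in lebesgue. \<phi> (cis t) \<inter> L = {0})"
    and in1: "(x1, L1) \<in> essential_graph \<omega> n \<phi>"
    and in2: "(x2, L2) \<in> essential_graph \<omega> n \<phi>"
    and neq: "x1 \<noteq> x2"
  shows "L1 \<inter> L2 = {0}"
proof -
  interpret symp \<omega> n by (rule symp.intro) (rule symp)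
  have lagc: "lagrangian \<omega> n (\<phi> (cis t))" for t using phi_lag by simp
  have in1': "cmod x1 = 1 \<and> lagrangian \<omega> n L1 \<and> (\<forall>e>0. emeasure lebesgue
         {t \<in> {0..<2 * pi}. dist (cis t) x1 < e \<and> norm (lproj (\<phi> (cis t)) - lproj L1) < e} > 0)"
    using in1 unfolding essential_graph_def by simp
  have in2': "cmod x2 = 1 \<and> lagrangian \<omega> n L2 \<and> (\<forall>e>0. emeasure lebesgue
         {t \<in> {0..<2 * pi}. dist (cis t) x2 < e \<and> norm (lproj (\<phi> (cis t)) - lproj L2) < e} > 0)"
    using in2 unfolding essential_graph_def by simp
  obtain t1 t2 where tt: "x1 = cis t1" "x2 = cis t2" "t1 < t2" "t2 < t1 + 2 * pi"
    using angles[of x1 x2] in1' in2' neq by blast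
  define Mx where "Mx a b c \<longleftrightarrow> maslov \<omega> (\<phi> (cis a)) (\<phi> (cis b)) (\<phi> (cis c)) = int n * beta1 (cis a) (cis b) (cis c)" for a b c
  have maxM: "AE p in (lborel :: (real \<times> real \<times> real) measure). Mx (fst p) (fst (snd p)) (snd (snd p))"
    using maximal unfolding Mx_def .
  note F = fub[OF maxM]
  have T: "AE t in lborel. \<phi> (cis t) \<inter> L = {0}" if "lagrangian \<omega> n L" for L
    using transv[rule_format, OF that] by (simp only: AE_completion_iff)
  have aey: "AE y in lborel. (AE y' in lborel. AE z in lborel. Mx y y' z) \<and> (AE z in lborel. AE a in lborel. Mx a y z)"
    using F(1) F(2) by (rule eventually_conj)
  have "\<exists>y. t1 < y \<and> y < t1 + (t2 - t1) / 2 \<and> ((AE y' in lborel. AE z in lborel. Mx y y' z) \<and> (AE z in lborel. AE a in lborel. Mx a y z))"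
    by (rule sel_ioo[OF _ aey]) (use tt in \<open>simp add: field_simps\<close>)
  then obtain y where y: "t1 < y" "y < t1 + (t2 - t1) / 2"
      "AE y' in lborel. AE z in lborel. Mx y y' z" "AE z in lborel. AE a in lborel. Mx a y z"
    by blast
  have aey': "AE y' in lborel. (AE z in lborel. Mx y y' z) \<and> (AE z in lborel. AE c in lborel. Mx y' c z)"
    using y(3) F(3) by (rule eventually_conj)
  have "\<exists>y'. t1 + (t2 - t1) / 2 < y' \<and> y' < t2 \<and> ((AE z in lborel. Mx y y' z) \<and> (AE z in lborel. AE c in lborel. Mx y' c z))"
    by (rule sel_ioo[OF _ aey']) (use tt in \<open>simp add: field_simps\<close>)
  then obtain y' where y': "t1 + (t2 - t1) / 2 < y'" "y' < t2"
      "AE z in lborel. Mx y y' z" "AE z in lborel. AE c in lborel. Mx y' c z"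
    by blast
  have aez: "AE z in lborel. (Mx y y' z \<and> (AE a in lborel. Mx a y z)) \<and> ((AE c in lborel. Mx y' c z) \<and>
      (\<phi> (cis z) \<inter> L1 = {0} \<and> (\<phi> (cis z) \<inter> \<phi> (cis y) = {0} \<and> \<phi> (cis z) \<inter> \<phi> (cis y') = {0})))"
    by (intro eventually_conj y'(3) y(4) y'(4) T in1'[THEN conjunct2, THEN conjunct1] lagc)
  have "\<exists>z. t2 < z \<and> z < t1 + 2 * pi \<and> ((Mx y y' z \<and> (AE a in lborel. Mx a y z)) \<and> ((AE c in lborel. Mx y' c z) \<and>
      (\<phi> (cis z) \<inter> L1 = {0} \<and> (\<phi> (cis z) \<inter> \<phi> (cis y) = {0} \<and> \<phi> (cis z) \<inter> \<phi> (cis y') = {0}))))"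
    by (rule sel_ioo[OF _ aez]) (use tt in \<open>simp add: field_simps\<close>)
  then obtain z where z: "t2 < z" "z < t1 + 2 * pi" "Mx y y' z" "AE a in lborel. Mx a y z"
      "AE c in lborel. Mx y' c z" "\<phi> (cis z) \<inter> L1 = {0}" "\<phi> (cis z) \<inter> \<phi> (cis y) = {0}"
      "\<phi> (cis z) \<inter> \<phi> (cis y') = {0}"
    by blast
  define Y where "Y = \<phi> (cis y)"
  define Y' where "Y' = \<phi> (cis y')"
  define N where "N = \<phi> (cis z)"
  have ord: "t1 < y" "y < y'" "y' < t2" "t2 < z" "z < t1 + 2 * pi" using y y' z by auto
  have o2: "Im (cnj (cis y' - cis y) * (cis z - cis y)) > 0" using ord by (intro orient) auto
  have strict: "maslov \<omega> Y Y' N = int n"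
    using z(3) beta1_pos[OF o2] unfolding Mx_def Y_def Y'_def N_def by simp
  have o1: "Im (cnj (cis y - x1) * (cis z - x1)) > 0" unfolding tt using ord by (intro orient) auto
  have o3: "Im (cnj (cis t2 - cis y') * (cis z - cis y')) > 0" using ord by (intro orient) auto
  obtain e1 where e1: "e1 > 0" "\<forall>x. dist x x1 < e1 \<longrightarrow> Im (cnj (cis y - x) * (cis z - x)) > 0"
    using near_im1[OF o1] by blast
  obtain e3 where e3: "e3 > 0" "\<forall>x. dist x x2 < e3 \<longrightarrow> Im (cnj (x - cis y') * (cis z - cis y')) > 0"
  proof -
    have o3': "Im (cnj (x2 - cis y') * (cis z - cis y')) > 0" using o3 tt(2) by simp
    show ?thesis using near_im2[OF o3'] that by blast
  qed
  have H1: "\<forall>e>0. \<exists>L. lagrangian \<omega> n L \<and> norm (lproj L - lproj L1) < e \<and> maslov \<omega> L Y N = int n"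
  proof (intro allI impI)
    fix e :: real assume e: "e > 0"
    have pos: "emeasure lebesgue {t \<in> {0..<2 * pi}. dist (cis t) x1 < min e e1 \<and> norm (lproj (\<phi> (cis t)) - lproj L1) < min e e1} > 0"
      by (rule in1'[THEN conjunct2, THEN conjunct2, rule_format]) (use e e1 in simp)
    have ae: "AE a in lebesgue. Mx a y z" by (rule AE_completion[OF z(4)])
    obtain t where t: "dist (cis t) x1 < min e e1" "norm (lproj (\<phi> (cis t)) - lproj L1) < min e e1" "Mx t y z"
      using sel_measure[OF pos ae] by blast
    have "dist (cis t) x1 < e1" using t(1) by simp
    then have "Im (cnj (cis y - cis t) * (cis z - cis t)) > 0" using e1(2) by blast
    then have "beta1 (cis t) (cis y) (cis z) = 1" by (rule beta1_pos)
    then have "maslov \<omega> (\<phi> (cis t)) Y N = int n" using t(3) unfolding Mx_def Y_def N_def by simp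
    then show "\<exists>L. lagrangian \<omega> n L \<and> norm (lproj L - lproj L1) < e \<and> maslov \<omega> L Y N = int n"
      using lagc t(2) by (intro exI[of _ "\<phi> (cis t)"]) auto
  qed
  have H2: "\<forall>e>0. \<exists>L. lagrangian \<omega> n L \<and> L \<inter> N = {0} \<and> norm (lproj L - lproj L2) < e \<and> maslov \<omega> Y' L N = int n"
  proof (intro allI impI)
    fix e :: real assume e: "e > 0"
    have pos: "emeasure lebesgue {t \<in> {0..<2 * pi}. dist (cis t) x2 < min e e3 \<and> norm (lproj (\<phi> (cis t)) - lproj L2) < min e e3} > 0"
      by (rule in2'[THEN conjunct2, THEN conjunct2, rule_format]) (use e e3 in simp)
    have ae: "AE c in lebesgue. Mx y' c z \<and> \<phi> (cis c) \<inter> N = {0}"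
    proof (rule eventually_conj)
      show "AE c in lebesgue. Mx y' c z" by (rule AE_completion[OF z(5)])
      show "AE c in lebesgue. \<phi> (cis c) \<inter> N = {0}" unfolding N_def using transv[rule_format, OF lagc[of z]] .
    qed
    obtain t where t: "dist (cis t) x2 < min e e3" "norm (lproj (\<phi> (cis t)) - lproj L2) < min e e3" "Mx y' t z"
      "\<phi> (cis t) \<inter> N = {0}"
      using sel_measure[OF pos ae] by blast
    have "dist (cis t) x2 < e3" using t(1) by simp
    then have "Im (cnj (cis t - cis y') * (cis z - cis y')) > 0" using e3(2) by blast
    then have "beta1 (cis y') (cis t) (cis z) = 1" by (rule beta1_pos)
    then have "maslov \<omega> Y' (\<phi> (cis t)) N = int n" using t(3) unfolding Mx_def Y'_def N_def by simp
    then show "\<exists>L. lagrangian \<omega> n L \<and> L \<inter> N = {0} \<and> norm (lproj L - lproj L2) < e \<and> maslov \<omega> Y' L N = int n"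
      using lagc t(2,4) by (intro exI[of _ "\<phi> (cis t)"]) auto
  qed
  show ?thesis
  proof (rule core[OF _ _ _ _ _ _ _ _ strict H1 H2])
    show "lagrangian \<omega> n L1" "lagrangian \<omega> n L2" using in1' in2' by auto
    show "lagrangian \<omega> n N" "lagrangian \<omega> n Y" "lagrangian \<omega> n Y'" unfolding N_def Y_def Y'_def by (rule lagc)+
    show "L1 \<inter> N = {0}" "Y \<inter> N = {0}" "Y' \<inter> N = {0}" using z(6-8) unfolding N_def Y_def Y'_def by auto
  qed
qed

end
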